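(* Let $\beta>0$ and let $V\in\mathbb R^{d\times d}$ be real symmetric with orthonormal eigenbasis $(e_k)_{k=1}^d$ and eigenvalues $(\lambda_k)$ satisfying $\lambda_1>\max_{k\ge2}|\lambda_k|$. Let $x_i(t)\in\mathbb S^{d-1}$, $i\in[n]$, solve \[ \dot x_i=P^\perp_{x_i}\Big(\frac1{Z_i}\sum_{j=1}^n e^{\beta\langle x_i,Vx_j\rangle}Vx_j\Big),\qquad Z_i=\sum_{k=1}^n e^{\beta\langle x_i,Vx_k\rangle}, \] and write $c_{i,k}(t)=\langle x_i(t),e_k\rangle$. If there is $\delta>0$ with $c_{i,1}(0)\le-\delta$ for all $i\in[n]$, then $x_i(t)\to-e_1$ as $t\to\infty$ for all $i\in[n]$.
   Context: $P^\perp_xy=y-\langle x,y\rangle x$ denotes the orthogonal projection onto $T_x\mathbb S^{d-1}$. *)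

theory Defs
  imports "HOL-Analysis.Analysis"
begin

definition proj_perp :: "real ^ 'd \<Rightarrow> real ^ 'd \<Rightarrow> real ^ 'd" where
  "proj_perp x y = y - (x \<bullet> y) *\<^sub>R x"

definition attn_Z :: "real \<Rightarrow> real ^ 'd ^ 'd \<Rightarrow> ('n::finite \<Rightarrow> real ^ 'd) \<Rightarrow> 'n \<Rightarrow> real" where
  "attn_Z \<beta> V X i = (\<Sum>k\<in>UNIV. exp (\<beta> * (X i \<bullet> (V *v X k))))"

definition attn_field :: "real \<Rightarrow> real ^ 'd ^ 'd \<Rightarrow> ('n::finite \<Rightarrow> real ^ 'd) \<Rightarrow> 'n \<Rightarrow> real ^ 'd" where
  "attn_field \<beta> V X i = proj_perp (X i)
     ((1 / attn_Z \<beta> V X i) *\<^sub>R (\<Sum>j\<in>UNIV. exp (\<beta> * (X i \<bullet> (V *v X j))) *\<^sub>R (V *v X j)))"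

end

theory Submission
  imports Defs
begin

lemma onb_inner_sum:
  fixes e :: "'d \<Rightarrow> real ^ 'd"
  assumes on: "\<And>k l. e k \<bullet> e l = (if k = l then 1 else 0)"
  shows "(\<Sum>k\<in>UNIV. a k *\<^sub>R e k) \<bullet> (\<Sum>k\<in>UNIV. b k *\<^sub>R e k) = (\<Sum>k\<in>UNIV. a k * b k)"
  by (simp add: inner_sum_left inner_sum_right on if_distrib cong: if_cong) (simp add: mult.commute)

lemma sym_inner:
  fixes V :: "real ^ 'd ^ 'd"
  assumes "transpose V = V"
  shows "x \<bullet> (V *v y) = (V *v x) \<bullet> y"
  by (metis assms dot_lmul_matrix transpose_matrix_vector)

lemma onb_expand:
  fixes e :: "'d \<Rightarrow> real ^ 'd"
  assumes on: "\<And>k l. e k \<bullet> e l = (if k = l then 1 else 0)"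
  shows "z = (\<Sum>k\<in>UNIV. (z \<bullet> e k) *\<^sub>R e k)"
proof -
  have inj: "inj e"
  proof (rule injI)
    fix k l assume "e k = e l"
    then have "e k \<bullet> e l = 1" using on[of k k] by simp
    then show "k = l" using on[of k l] by (auto split: if_splits)
  qed
  have ind: "independent (range e)"
  proof (rule pairwise_orthogonal_independent)
    show "pairwise orthogonal (range e)"
      unfolding pairwise_def orthogonal_def using on by auto
    show "0 \<notin> range e" using on by (metis imageE inner_zero_left zero_neq_one)
  qed
  have card: "card (range e) = CARD('d)" using inj by (simp add: card_image)
  have sp: "UNIV \<subseteq> span (range e)"
    by (rule card_ge_dim_independent) (use ind card in auto)
  define w where "w = z - (\<Sum>k\<in>UNIV. (z \<bullet> e k) *\<^sub>R e k)"
  have wo: "w \<bullet> e l = 0" for l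
  proof -
    have "(\<Sum>k\<in>UNIV. (z \<bullet> e k) *\<^sub>R e k) \<bullet> e l = (\<Sum>k\<in>UNIV. (z \<bullet> e k) * (if k = l then 1 else 0))"
      by (simp add: inner_sum_left on)
    also have "\<dots> = z \<bullet> e l" by (simp add: if_distrib cong: if_cong)
    finally show ?thesis by (simp add: w_def inner_diff_left)
  qed
  have "orthogonal w w"
    by (rule orthogonal_to_span) (use sp wo in \<open>auto simp: orthogonal_def\<close>)
  then have "w = 0" by (simp add: orthogonal_def)
  then show ?thesis by (simp add: w_def)
qed

lemma norm_V_perp:
  fixes e :: "'d \<Rightarrow> real ^ 'd" and V :: "real ^ 'd ^ 'd"
  assumes on: "\<And>k l. e k \<bullet> e l = (if k = l then 1 else 0)"
    and eig: "\<And>k. V *v e k = lam k *\<^sub>R e k"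
    and mu: "0 \<le> \<mu>" "\<And>k. k \<noteq> k1 \<Longrightarrow> \<bar>lam k\<bar> \<le> \<mu>"
    and z: "z \<bullet> e k1 = 0"
  shows "norm (V *v z) \<le> \<mu> * norm z"
proof -
  have ez: "z = (\<Sum>k\<in>UNIV. (z \<bullet> e k) *\<^sub>R e k)" by (rule onb_expand[OF on])
  have "V *v z = V *v (\<Sum>k\<in>UNIV. (z \<bullet> e k) *\<^sub>R e k)" using ez by simp
  also have "\<dots> = (\<Sum>k\<in>UNIV. (lam k * (z \<bullet> e k)) *\<^sub>R e k)"
    by (simp add: linear_sum[OF matrix_vector_mul_linear] matrix_vector_mult_scaleR eig o_def mult.commute)
  finally have Vz: "V *v z = (\<Sum>k\<in>UNIV. (lam k * (z \<bullet> e k)) *\<^sub>R e k)" .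
  have n1: "(norm (V *v z))\<^sup>2 = (\<Sum>k\<in>UNIV. (lam k * (z \<bullet> e k))\<^sup>2)"
    unfolding power2_norm_eq_inner Vz onb_inner_sum[OF on] by (simp add: power2_eq_square)
  have n2: "(norm z)\<^sup>2 = (\<Sum>k\<in>UNIV. (z \<bullet> e k)\<^sup>2)"
  proof -
    have "(norm z)\<^sup>2 = z \<bullet> (\<Sum>k\<in>UNIV. (z \<bullet> e k) *\<^sub>R e k)"
      by (simp add: power2_norm_eq_inner flip: ez)
    also have "\<dots> = (\<Sum>k\<in>UNIV. (z \<bullet> e k)\<^sup>2)"
      by (simp add: inner_sum_right power2_eq_square)
    finally show ?thesis .
  qed
  have "(\<Sum>k\<in>UNIV. (lam k * (z \<bullet> e k))\<^sup>2) \<le> (\<Sum>k\<in>UNIV. \<mu>\<^sup>2 * (z \<bullet> e k)\<^sup>2)"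
  proof (rule sum_mono)
    fix k :: 'd
    show "(lam k * (z \<bullet> e k))\<^sup>2 \<le> \<mu>\<^sup>2 * (z \<bullet> e k)\<^sup>2"
    proof (cases "k = k1")
      case True then show ?thesis using z by simp
    next
      case False
      then have "(lam k)\<^sup>2 \<le> \<mu>\<^sup>2" using mu(2)[OF False]
        by (metis abs_ge_zero power2_abs power_mono)
      then show ?thesis by (simp add: power_mult_distrib mult_right_mono)
    qed
  qed
  also have "\<dots> = (\<mu> * norm z)\<^sup>2" by (simp add: n2 power_mult_distrib sum_distrib_left)
  finally have "(norm (V *v z))\<^sup>2 \<le> (\<mu> * norm z)\<^sup>2" using n1 by simp
  then show ?thesis using mu(1) by (simp add: power2_le_iff_abs_le)
qed


lemma key_ineq:
  fixes e :: "'d \<Rightarrow> real ^ 'd" and V :: "real ^ 'd ^ 'd"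
  assumes on: "\<And>k l. e k \<bullet> e l = (if k = l then 1 else 0)"
    and eig: "\<And>k. V *v e k = lam k *\<^sub>R e k"
    and sym: "transpose V = V"
    and mu: "0 \<le> \<mu>" "\<And>k. k \<noteq> k1 \<Longrightarrow> \<bar>lam k\<bar> \<le> \<mu>"
    and ka: "(\<exists>k. k \<noteq> k1) \<Longrightarrow> \<kappa> \<le> lam k1 - \<mu>" "\<kappa> > 0"
    and nx: "norm x = 1" and ny: "norm y = 1"
    and p0: "0 \<le> - (x \<bullet> e k1)" and pxy: "- (x \<bullet> e k1) \<le> - (y \<bullet> e k1)"
  shows "lam k1 * (- (y \<bullet> e k1)) - (x \<bullet> (V *v y)) * (- (x \<bullet> e k1))
          \<ge> \<kappa> * (- (x \<bullet> e k1)) * (1 - (x \<bullet> e k1)\<^sup>2)"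
proof -
  define a where "a = x \<bullet> e k1"
  define b where "b = y \<bullet> e k1"
  define x' where "x' = x - a *\<^sub>R e k1"
  define y' where "y' = y - b *\<^sub>R e k1"
  have e1: "e k1 \<bullet> e k1 = 1" using on by simp
  have x'e: "x' \<bullet> e k1 = 0" by (simp add: x'_def a_def inner_diff_left e1)
  have y'e: "y' \<bullet> e k1 = 0" by (simp add: y'_def b_def inner_diff_left e1)
  have x'e2: "e k1 \<bullet> x' = 0" using x'e by (simp add: inner_commute)
  have y'e2: "e k1 \<bullet> y' = 0" using y'e by (simp add: inner_commute)
  have xd: "x = a *\<^sub>R e k1 + x'" by (simp add: x'_def)
  have yd: "y = b *\<^sub>R e k1 + y'" by (simp add: y'_def)
  define r where "r = x' \<bullet> (V *v y')"
  have eVy': "e k1 \<bullet> (V *v y') = 0"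
    using sym_inner[OF sym, of "e k1" y'] eig[of k1] y'e by (simp add: inner_commute)
  have x'Ve: "x' \<bullet> (V *v e k1) = 0" using eig[of k1] x'e by simp
  have q: "x \<bullet> (V *v y) = lam k1 * a * b + r"
    unfolding r_def
    apply (subst xd, subst yd)
    by (simp add: matrix_vector_right_distrib matrix_vector_mult_scaleR inner_add_left inner_add_right
        eig eVy' x'Ve e1 x'e2 x'e)
  have nx': "(norm x')\<^sup>2 = 1 - a\<^sup>2"
  proof -
    have "(norm x)\<^sup>2 = (norm x')\<^sup>2 + a\<^sup>2"
      unfolding power2_norm_eq_inner xd
      by (simp add: inner_add_left inner_add_right e1 x'e x'e2 power2_eq_square)
    then show ?thesis using nx by simp
  qed
  have ny': "(norm y')\<^sup>2 = 1 - b\<^sup>2"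
  proof -
    have "(norm y)\<^sup>2 = (norm y')\<^sup>2 + b\<^sup>2"
      unfolding power2_norm_eq_inner yd
      by (simp add: inner_add_left inner_add_right e1 y'e y'e2 power2_eq_square)
    then show ?thesis using ny by simp
  qed
  have Vy': "norm (V *v y') \<le> \<mu> * norm y'" by (rule norm_V_perp[OF on eig mu y'e])
  have rb: "\<bar>r\<bar> \<le> norm x' * (\<mu> * norm y')"
  proof -
    have "\<bar>r\<bar> \<le> norm x' * norm (V *v y')" unfolding r_def by (rule Cauchy_Schwarz_ineq2)
    also have "\<dots> \<le> norm x' * (\<mu> * norm y')" by (rule mult_left_mono[OF Vy' norm_ge_zero])
    finally show ?thesis .
  qed
  define p where "p = - a"
  define s where "s = norm x'"
  define t where "t = norm y'"
  have lhs: "lam k1 * (- (y \<bullet> e k1)) - (x \<bullet> (V *v y)) * (- (x \<bullet> e k1))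
      = lam k1 * (-b) * s\<^sup>2 - r * p"
    unfolding q s_def nx' p_def by (simp add: a_def[symmetric] b_def[symmetric] algebra_simps power2_eq_square)
  have rhs: "\<kappa> * (- (x \<bullet> e k1)) * (1 - (x \<bullet> e k1)\<^sup>2) = \<kappa> * p * s\<^sup>2"
    unfolding s_def nx' p_def a_def by simp
  have pge: "0 \<le> p" using p0 by (simp add: p_def a_def)
  have pq: "p \<le> -b" using pxy by (simp add: p_def a_def b_def)
  show ?thesis
  proof (cases "s = 0")
    case True
    then have "\<bar>r\<bar> \<le> 0" using rb by (simp add: s_def)
    then show ?thesis unfolding lhs rhs using True by simp
  next
    case False
    have ex: "\<exists>k. k \<noteq> k1"
    proof (rule ccontr)
      assume "\<not> (\<exists>k. k \<noteq> k1)"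
      then have U: "UNIV = {k1}" by auto
      have "x' = (\<Sum>k\<in>UNIV. (x' \<bullet> e k) *\<^sub>R e k)" by (rule onb_expand[OF on])
      also have "\<dots> = 0" by (subst U) (simp add: x'e)
      finally show False using False by (simp add: s_def)
    qed
    have kl: "\<kappa> \<le> lam k1 - \<mu>" using ka(1)[OF ex] .
    have s0: "s > 0" using False by (simp add: s_def)
    have t0: "t \<ge> 0" by (simp add: t_def)
    have ts: "t \<le> s"
    proof -
      have "t\<^sup>2 \<le> s\<^sup>2" unfolding s_def t_def nx' ny'
        using pge pq by (simp add: p_def) (smt (verit) power_mono power2_minus)
      then show ?thesis using s0 t0 by (simp add: power2_le_iff_abs_le)
    qed
    have r1: "r * p \<le> \<mu> * p * s\<^sup>2"
    proof -
      have "r * p \<le> \<bar>r\<bar> * p" using pge by (simp add: mult_right_mono)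
      also have "\<dots> \<le> (s * (\<mu> * t)) * p" using rb pge by (simp add: s_def t_def mult_right_mono)
      also have "\<dots> \<le> (s * (\<mu> * s)) * p"
        using ts mu(1) pge s0 by (simp add: mult_left_mono mult_right_mono)
      finally show ?thesis by (simp add: power2_eq_square algebra_simps)
    qed
    have l1: "lam k1 * p * s\<^sup>2 \<le> lam k1 * (-b) * s\<^sup>2"
    proof -
      have "0 \<le> lam k1" using kl ka(2) mu(1) by simp
      then have "lam k1 * p \<le> lam k1 * (-b)" using pq by (metis mult_left_mono)
      then show ?thesis by (rule mult_right_mono) simp
    qed
    have "\<kappa> * p * s\<^sup>2 \<le> (lam k1 - \<mu>) * p * s\<^sup>2"
      using kl pge by (simp add: mult_right_mono)
    then show ?thesis unfolding lhs rhs using r1 l1 by (simp add: algebra_simps)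
  qed
qed


lemma field_formula:
  fixes V :: "real ^ 'd ^ 'd" and X :: "'n::finite \<Rightarrow> real ^ 'd"
  assumes sym: "transpose V = V" and eig: "V *v v = l *\<^sub>R v"
  shows "- (attn_field \<beta> V X i \<bullet> v) = (1 / attn_Z \<beta> V X i) *
     (\<Sum>j\<in>UNIV. exp (\<beta> * (X i \<bullet> (V *v X j))) * (l * (- (X j \<bullet> v)) - (X i \<bullet> (V *v X j)) * (- (X i \<bullet> v))))"
proof -
  have a: "(V *v X j) \<bullet> v = l * (X j \<bullet> v)" for j
    using sym_inner[OF sym, of "X j" v] eig by (simp add: inner_commute)
  show ?thesis
    unfolding attn_field_def proj_perp_def
    by (simp add: inner_diff_left inner_sum_left inner_sum_right a sum_distrib_left sum_distrib_right
        sum_subtractf algebra_simps)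
qed

lemma field_bound:
  fixes e :: "'d \<Rightarrow> real ^ 'd" and V :: "real ^ 'd ^ 'd" and X :: "'n::finite \<Rightarrow> real ^ 'd"
  assumes on: "\<And>k l. e k \<bullet> e l = (if k = l then 1 else 0)"
    and eig: "\<And>k. V *v e k = lam k *\<^sub>R e k"
    and sym: "transpose V = V"
    and mu: "0 \<le> \<mu>" "\<And>k. k \<noteq> k1 \<Longrightarrow> \<bar>lam k\<bar> \<le> \<mu>"
    and ka: "(\<exists>k. k \<noteq> k1) \<Longrightarrow> \<kappa> \<le> lam k1 - \<mu>" "\<kappa> > 0"
    and nX: "\<And>j. norm (X j) = 1"
    and p0: "0 \<le> - (X i \<bullet> e k1)" and pmin: "\<And>j. - (X i \<bullet> e k1) \<le> - (X j \<bullet> e k1)"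
  shows "- (attn_field \<beta> V X i \<bullet> e k1) \<ge> \<kappa> * (- (X i \<bullet> e k1)) * (1 - (X i \<bullet> e k1)\<^sup>2)"
proof -
  define w where "w j = exp (\<beta> * (X i \<bullet> (V *v X j)))" for j
  define K where "K = \<kappa> * (- (X i \<bullet> e k1)) * (1 - (X i \<bullet> e k1)\<^sup>2)"
  have Z: "attn_Z \<beta> V X i = (\<Sum>j\<in>UNIV. w j)" by (simp add: attn_Z_def w_def)
  have Zpos: "(\<Sum>j\<in>UNIV. w j) > 0"
    by (rule sum_pos) (auto simp: w_def)
  have "(\<Sum>j\<in>UNIV. w j) * K \<le> (\<Sum>j\<in>UNIV. w j * (lam k1 * (- (X j \<bullet> e k1)) - (X i \<bullet> (V *v X j)) * (- (X i \<bullet> e k1))))"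
    unfolding sum_distrib_right
  proof (rule sum_mono)
    fix j
    have "K \<le> lam k1 * (- (X j \<bullet> e k1)) - (X i \<bullet> (V *v X j)) * (- (X i \<bullet> e k1))"
      unfolding K_def by (rule key_ineq[OF on eig sym mu ka nX nX p0 pmin])
    then show "w j * K \<le> w j * (lam k1 * (- (X j \<bullet> e k1)) - (X i \<bullet> (V *v X j)) * (- (X i \<bullet> e k1)))"
      by (simp add: w_def mult_left_mono)
  qed
  then have "K \<le> (1 / attn_Z \<beta> V X i) * (\<Sum>j\<in>UNIV. w j * (lam k1 * (- (X j \<bullet> e k1)) - (X i \<bullet> (V *v X j)) * (- (X i \<bullet> e k1))))"
    using Zpos unfolding Z by (simp add: field_simps)
  then show ?thesis
    unfolding field_formula[OF sym eig] K_def w_def by simp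
qed

lemma barrier:
  fixes f :: "'n::finite \<Rightarrow> real \<Rightarrow> real" and h :: "real \<Rightarrow> real"
  assumes ab: "a \<le> b"
    and cf: "\<And>i. continuous_on {a..b} (f i)" and ch: "continuous_on {a..b} h"
    and df: "\<And>i t. a < t \<Longrightarrow> t \<le> b \<Longrightarrow> (f i has_real_derivative D i t) (at t)"
    and dh: "\<And>t. a < t \<Longrightarrow> t \<le> b \<Longrightarrow> (h has_real_derivative Dh t) (at t)"
    and init: "\<And>i. f i a > h a"
    and touch: "\<And>i t. a < t \<Longrightarrow> t \<le> b \<Longrightarrow> f i t = h t \<Longrightarrow> (\<forall>j. f j t \<ge> h t) \<Longrightarrow> D i t > Dh t"
  shows "\<forall>i. \<forall>t\<in>{a..b}. f i t > h t"
proof (rule ccontr)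
  assume neg: "\<not> ?thesis"
  define S where "S = {t\<in>{a..b}. \<exists>i. f i t \<le> h t}"
  have Sne: "S \<noteq> {}" using neg by (auto simp: S_def not_less)
  have Seq: "S = (\<Union>i. {a..b} \<inter> (\<lambda>t. f i t - h t) -` {..0})" by (auto simp: S_def)
  have "closed S" unfolding Seq
    by (intro closed_Union finite_imageI finite ballI)
       (auto intro!: continuous_closed_preimage continuous_on_diff cf ch)
  moreover have bdd: "bdd_below S" by (auto simp: S_def bdd_below_def)
  ultimately have tS: "Inf S \<in> S" using Sne by (rule_tac closed_contains_Inf) auto
  define t where "t = Inf S"
  have ta: "a \<le> t" "t \<le> b" using tS by (auto simp: S_def t_def)
  obtain i where fi: "f i t \<le> h t" using tS by (auto simp: S_def t_def)
  have ta': "a < t" using ta fi init[of i] by (cases "a = t") auto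
  have below: "f j s > h s" if "a \<le> s" "s < t" for j s
  proof (rule ccontr)
    assume "\<not> ?thesis"
    then have "s \<in> S" using that ta by (auto simp: S_def not_less)
    then have "t \<le> s" unfolding t_def by (rule cInf_lower[OF _ bdd])
    then show False using that by simp
  qed
  have ge: "f j t \<ge> h t" for j
  proof -
    have c: "isCont (\<lambda>s. f j s - h s) t"
      using df[OF ta' ta(2)] dh[OF ta' ta(2)] by (intro continuous_intros) (auto intro: DERIV_isCont)
    then have "((\<lambda>s. f j s - h s) \<longlongrightarrow> f j t - h t) (at_left t)"
      by (simp add: isCont_def filterlim_at_split)
    moreover have "eventually (\<lambda>s. f j s - h s \<ge> 0) (at_left t)"
      using eventually_at_left_real[OF ta'] by eventually_elim (use below in \<open>auto intro: less_imp_le\<close>)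
    ultimately have "f j t - h t \<ge> 0" by (rule tendsto_lowerbound) simp
    then show ?thesis by simp
  qed
  have eq: "f i t = h t" using ge[of i] fi by simp
  have pos: "D i t - Dh t > 0" using touch[OF ta' ta(2) eq] ge by simp
  have "((\<lambda>s. f i s - h s) has_real_derivative D i t - Dh t) (at t)"
    by (intro derivative_intros df dh ta' ta(2))
  from DERIV_pos_inc_left[OF this pos] obtain d where d: "d > 0"
    "\<And>k. k > 0 \<Longrightarrow> k < d \<Longrightarrow> f i (t - k) - h (t - k) < f i t - h t" by blast
  define k where "k = min (d/2) ((t - a)/2)"
  have "f i (t - k) - h (t - k) < 0" using d(2)[of k] d(1) ta' eq by (simp add: k_def)
  moreover have "a \<le> t - k" "t - k < t" using d(1) ta' by (auto simp: k_def min_def field_simps)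
  then have "f i (t - k) > h (t - k)" by (rule below)
  ultimately show False by simp
qed

theorem corollary6p2:
  fixes \<beta> :: real
    and V :: "real ^ 'd ^ 'd"
    and e :: "'d \<Rightarrow> real ^ 'd"
    and lam :: "'d \<Rightarrow> real"
    and k1 :: 'd
    and x :: "'n::finite \<Rightarrow> real \<Rightarrow> real ^ 'd"
    and \<delta> :: real
  assumes beta_pos: "\<beta> > 0"
    and V_sym: "transpose V = V"
    and e_orthonormal: "\<And>k l. e k \<bullet> e l = (if k = l then 1 else 0)"
    and e_eigen: "\<And>k. V *v e k = lam k *\<^sub>R e k"
    and spectral_gap: "\<And>k. k \<noteq> k1 \<Longrightarrow> lam k1 > \<bar>lam k\<bar>"
    and on_sphere: "\<And>i t. t \<ge> 0 \<Longrightarrow> norm (x i t) = 1"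
    and ode: "\<And>i t. t \<ge> 0 \<Longrightarrow>
       ((x i) has_vector_derivative attn_field \<beta> V (\<lambda>j. x j t) i) (at t within {0..})"
    and delta_pos: "\<delta> > 0"
    and init: "\<And>i. x i 0 \<bullet> e k1 \<le> - \<delta>"
  shows "\<forall>i. ((x i) \<longlongrightarrow> - e k1) at_top"
proof -
  define \<mu> where "\<mu> = Max (insert 0 ((\<lambda>k. \<bar>lam k\<bar>) ` {k. k \<noteq> k1}))"
  define \<kappa> where "\<kappa> = (if \<exists>k. k \<noteq> k1 then lam k1 - \<mu> else 1)"
  have mu0: "0 \<le> \<mu>" unfolding \<mu>_def by (rule Max_ge) auto
  have mu1: "\<bar>lam k\<bar> \<le> \<mu>" if "k \<noteq> k1" for k
    unfolding \<mu>_def by (rule Max_ge) (use that in auto)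
  have ka1: "\<kappa> \<le> lam k1 - \<mu>" if "\<exists>k. k \<noteq> k1" using that by (simp add: \<kappa>_def)
  have ka2: "\<kappa> > 0"
  proof (cases "\<exists>k. k \<noteq> k1")
    case True
    then obtain k0 where k0: "k0 \<noteq> k1" by blast
    have "\<mu> < lam k1" unfolding \<mu>_def
      using spectral_gap k0 by (subst Max_less_iff) (auto intro: le_less_trans[OF abs_ge_zero])
    then show ?thesis using True by (simp add: \<kappa>_def)
  qed (simp add: \<kappa>_def)
  define p where "p i t = - (x i t \<bullet> e k1)" for i t
  define D where "D i t = - (attn_field \<beta> V (\<lambda>j. x j t) i \<bullet> e k1)" for i t
  have dpw: "(p i has_real_derivative D i t) (at t within {0..})" if "t \<ge> 0" for i t
  proof -
    have "((\<lambda>s. x i s \<bullet> e k1) has_derivative (\<lambda>h. (h *\<^sub>R attn_field \<beta> V (\<lambda>j. x j t) i) \<bullet> e k1)) (at t within {0..})"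
      using ode[OF that, of i, unfolded has_vector_derivative_def] by (rule has_derivative_inner_left)
    then have "((\<lambda>s. - (x i s \<bullet> e k1)) has_derivative (\<lambda>h. - ((h *\<^sub>R attn_field \<beta> V (\<lambda>j. x j t) i) \<bullet> e k1))) (at t within {0..})"
      by (rule has_derivative_minus)
    moreover have "(\<lambda>h. - ((h *\<^sub>R attn_field \<beta> V (\<lambda>j. x j t) i) \<bullet> e k1)) = (*) (D i t)"
      by (auto simp: D_def)
    ultimately show ?thesis unfolding has_field_derivative_def p_def[abs_def] by simp
  qed
  have dpa: "(p i has_real_derivative D i t) (at t)" if "t > 0" for i t
  proof -
    have "(p i has_real_derivative D i t) (at t within {0<..})"
      by (rule DERIV_subset[OF dpw]) (use that in auto)
    then show ?thesis using at_within_open[of t "{0<..}"] that by simp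
  qed
  have cp: "continuous_on {a..b} (p i)" if "a \<ge> 0" for a b i
  proof -
    have "continuous_on {0..} (p i)"
      unfolding continuous_on_eq_continuous_within
      by (auto intro: DERIV_continuous[OF dpw])
    then show ?thesis by (rule continuous_on_subset) (use that in auto)
  qed
  have touch: "D i t \<ge> \<kappa> * p i t * (1 - (p i t)\<^sup>2)"
    if "t \<ge> 0" "0 \<le> p i t" "\<And>j. p i t \<le> p j t" for i t
  proof -
    have "- (attn_field \<beta> V (\<lambda>j. x j t) i \<bullet> e k1) \<ge>
        \<kappa> * (- ((\<lambda>j. x j t) i \<bullet> e k1)) * (1 - ((\<lambda>j. x j t) i \<bullet> e k1)\<^sup>2)"
      by (rule field_bound[OF e_orthonormal e_eigen V_sym mu0 mu1 ka1 ka2])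
         (use that on_sphere in \<open>auto simp: p_def\<close>)
    then show ?thesis by (simp add: D_def p_def)
  qed
  have lin: "\<forall>i. p i T > c + \<rho> * (T - t0)"
    if c0: "0 < c" and r0: "0 \<le> \<rho>" and t00: "t0 \<ge> 0" and tT: "t0 \<le> T"
      and H1: "c + \<rho> * (T - t0) < 1" and rk: "\<rho> < \<kappa> * c * (1 - (c + \<rho> * (T - t0))\<^sup>2)"
      and st: "\<forall>i. p i t0 > c" for c \<rho> t0 T
  proof -
    have "\<forall>i. \<forall>t\<in>{t0..T}. p i t > c + \<rho> * (t - t0)"
    proof (rule barrier[where D=D and Dh="\<lambda>_. \<rho>"])
      show "t0 \<le> T" by (rule tT)
      show "continuous_on {t0..T} (p i)" for i by (rule cp[OF t00])
      show "continuous_on {t0..T} (\<lambda>t. c + \<rho> * (t - t0))" by (intro continuous_intros)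
      show "(p i has_real_derivative D i t) (at t)" if "t0 < t" for i t
        using dpa that t00 by simp
      show "((\<lambda>t. c + \<rho> * (t - t0)) has_real_derivative \<rho>) (at t)" for t
        by (auto intro!: derivative_eq_intros)
      show "p i t0 > c + \<rho> * (t0 - t0)" for i using st by simp
      fix i t
      assume t: "t0 < t" "t \<le> T" and eq: "p i t = c + \<rho> * (t - t0)"
        and all: "\<forall>j. c + \<rho> * (t - t0) \<le> p j t"
      define h where "h = c + \<rho> * (t - t0)"
      define H where "H = c + \<rho> * (T - t0)"
      have hc: "c \<le> h" using r0 t by (simp add: h_def)
      have hH: "h \<le> H" using r0 t by (simp add: h_def H_def mult_left_mono)
      have "D i t \<ge> \<kappa> * p i t * (1 - (p i t)\<^sup>2)"
        by (rule touch) (use t t00 eq all c0 hc h_def in auto)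
      then have Dh: "D i t \<ge> \<kappa> * h * (1 - h\<^sup>2)" using eq by (simp add: h_def)
      have "h\<^sup>2 \<le> H\<^sup>2" using hc hH c0 by (intro power_mono) auto
      then have "1 - H\<^sup>2 \<le> 1 - h\<^sup>2" by simp
      moreover have "0 \<le> 1 - H\<^sup>2" using H1 hc hH c0 unfolding H_def[symmetric]
        by (simp add: abs_square_le_1)
      ultimately have "\<kappa> * c * (1 - H\<^sup>2) \<le> \<kappa> * h * (1 - h\<^sup>2)"
        using ka2 c0 hc by (intro mult_mono) auto
      then show "\<rho> < D i t" using rk Dh unfolding H_def by simp
    qed
    then show ?thesis using tT by auto
  qed
  have ne1: "norm (e k1) = 1" by (simp add: norm_eq_sqrt_inner e_orthonormal)
  have ple1: "p i t \<le> 1" if "t \<ge> 0" for i t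
  proof -
    have "\<bar>x i t \<bullet> e k1\<bar> \<le> norm (x i t) * norm (e k1)" by (rule Cauchy_Schwarz_ineq2)
    then show ?thesis using on_sphere[OF that, of i] ne1 by (simp add: p_def)
  qed
  obtain i0 :: 'n where True by simp
  have d1: "\<delta> \<le> 1" using init[of i0] ple1[of 0 i0] by (simp add: p_def)
  have stay: "\<forall>i. p i t > c" if "0 < c" "c < 1" "t0 \<ge> 0" "\<forall>i. p i t0 > c" "t \<ge> t0" for c t0 t
  proof -
    have "0 < \<kappa> * c * (1 - c\<^sup>2)"
      using ka2 that(1,2) by (simp add: abs_square_less_1)
    then show ?thesis using lin[of c 0 t0 t] that by simp
  qed
  have start: "\<forall>i. p i 0 > \<delta>/2" using init delta_pos by (auto simp: p_def) (smt (verit) init)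
  have reach: "\<exists>T\<ge>0. \<forall>t\<ge>T. \<forall>i. p i t > L" if L1: "L < 1" for L
  proof (cases "L \<le> \<delta>/2")
    case True
    have "\<forall>i. p i t > \<delta>/2" if "t \<ge> 0" for t
      by (rule stay[of _ 0]) (use delta_pos d1 start that in auto)
    then show ?thesis using True by (intro exI[of _ 0]) (smt (verit))
  next
    case False
    define c where "c = \<delta>/2"
    define \<rho> where "\<rho> = \<kappa> * c * (1 - L\<^sup>2) / 2"
    define T where "T = (L - c) / \<rho>"
    have c0: "0 < c" using delta_pos by (simp add: c_def)
    have L0: "c < L" using False by (simp add: c_def)
    have L2: "0 < 1 - L\<^sup>2" using L1 L0 c0 by (simp add: abs_square_less_1)
    have r0: "0 < \<rho>" using ka2 c0 L2 by (simp add: \<rho>_def)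
    have T0: "0 \<le> T" using L0 r0 by (simp add: T_def)
    have H: "c + \<rho> * (T - 0) = L" using r0 by (simp add: T_def)
    have a: "c + \<rho> * (T - 0) < 1" using H L1 by simp
    have pos: "0 < \<kappa> * c * (1 - L\<^sup>2)" using ka2 c0 L2 by simp
    have b: "\<rho> < \<kappa> * c * (1 - (c + \<rho> * (T - 0))\<^sup>2)"
      unfolding H using pos by (simp add: \<rho>_def)
    have st: "\<forall>i. p i 0 > c" using start by (simp add: c_def)
    have "\<forall>i. p i T > c + \<rho> * (T - 0)"
      using lin[OF c0 less_imp_le[OF r0] order_refl T0 a b st] .
    then have pT: "\<forall>i. p i T > L" using H by simp
    have "\<forall>i. p i t > L" if "t \<ge> T" for t
      by (rule stay[of _ T]) (use c0 L0 L1 T0 pT that in auto)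
    then show ?thesis using T0 by blast
  qed
  show ?thesis
  proof
    fix i
    show "((x i) \<longlongrightarrow> - e k1) at_top"
      unfolding tendsto_iff
    proof (intro allI impI)
      fix \<epsilon> :: real assume ep: "\<epsilon> > 0"
      define L where "L = 1 - \<epsilon>\<^sup>2 / 4"
      have "L < 1" using ep by (simp add: L_def)
      then obtain T where T: "T \<ge> 0" "\<And>t. t \<ge> T \<Longrightarrow> \<forall>i. p i t > L" using reach by blast
      show "\<forall>\<^sub>F t in at_top. dist (x i t) (- e k1) < \<epsilon>"
        unfolding eventually_at_top_linorder
      proof (intro exI allI impI)
        fix t assume tT: "T \<le> t"
        have xx: "x i t \<bullet> x i t = 1" using on_sphere[of t i] T(1) tT
          by (simp add: power2_norm_eq_inner[symmetric])
        have ee: "e k1 \<bullet> e k1 = 1" using e_orthonormal by simp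
        have "(norm (x i t + e k1))\<^sup>2 = (x i t + e k1) \<bullet> (x i t + e k1)"
          by (rule power2_norm_eq_inner)
        also have "\<dots> = x i t \<bullet> x i t + 2 * (x i t \<bullet> e k1) + e k1 \<bullet> e k1"
          by (simp add: inner_add_left inner_add_right inner_commute)
        finally have n: "(norm (x i t + e k1))\<^sup>2 = 2 - 2 * p i t"
          using xx ee by (simp add: p_def)
        have "(norm (x i t + e k1))\<^sup>2 < \<epsilon>\<^sup>2"
        proof -
          have "1 - \<epsilon>\<^sup>2 / 4 < p i t" using T(2)[OF tT] by (simp add: L_def)
          moreover have "0 < \<epsilon>\<^sup>2" using ep by simp
          ultimately show ?thesis using n by linarith
        qed
        then have "norm (x i t + e k1) < \<epsilon>" using ep by (simp add: power_less_imp_less_base)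
        then show "dist (x i t) (- e k1) < \<epsilon>" by (simp add: dist_norm)
      qed
    qed
  qed
qed
end
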